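(* For the deterministic many-to-one interference channel, if a collection $A\subseteq\Gamma$ of constraints is consistent, then it is compatible.
   Context: Deterministic many-to-one interference channel with nonnegative integer gains $n_{ii}$ ($0\le i\le K$), $n_{0i}$ ($1\le i\le K$). Notation: $(a)^+=\max(a,0)$; $U_k=\{i:1\le i\le K,\ n_{0i}-n_{ii}<k\le n_{0i}\}$ for $1\le k\le n_{00}$; $f_k(S)=\max(|U_k\cap S|,1)$; $f_{\rm free}(i)=(n_{ii}-n_{0i})^++(n_{0i}-n_{00})^+$, $f_{\rm free}(S)=\sum_{i\in S}f_{\rm free}(i)$. The constraint list $\Gamma$ consists of the individual constraints $I_i: r_i\le n_{ii}$ ($0\le i\le K$) and the sum-rate constraints $\Sigma_S: r_0+\sum_{i\in S}r_i\le f_{\rm free}(S)+\sum_{k=1}^{n_{00}}f_k(S)$ for nonempty $S\subseteq\{1,\dots,K\}$. A subset $A\subseteq\Gamma$ is consistent if there is a rate point $(r_0,\dots,r_K)$ that satisfies every constraint in $A$ with equality and violates no constraint of $\Gamma$. To each constraint $c$ associate $N_s(c),N_d(c)\subseteq\{1,\dots,n_{00}\}$: for $\Sigma_S$, $N_s=\{k:|U_k\cap S|\ge2\}$, $N_d=\{k:U_k\cap S=\varnothing\}$; for $I_i$, $i\ge1$, $N_s=\{k:i\in U_k\}$, $N_d=\varnothing$; for $I_0$, $N_s=\varnothing$, $N_d=\{1,\dots,n_{00}\}$. $A$ is compatible if for any $c,c'\in A$, $N_s(c)\cap N_d(c')=\varnothing$ and $N_s(c')\cap N_d(c)=\varnothing$.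 *)

theory Defs
  imports Main "HOL.Real"
begin

text \<open>Deterministic many-to-one interference channel with K+1 users 0..K.
  dg i = n_ii (direct gains, 0 <= i <= K), cg i = n_0i (cross gains, 1 <= i <= K).
  Values of dg, cg outside these ranges are irrelevant.
  Nat subtraction a - b is exactly (a - b)^+.\<close>

datatype constr = Ind nat | SumC "nat set"

definition U :: "nat \<Rightarrow> (nat \<Rightarrow> nat) \<Rightarrow> (nat \<Rightarrow> nat) \<Rightarrow> nat \<Rightarrow> nat set" where
  "U K dg cg k = {i. 1 \<le> i \<and> i \<le> K \<and> int (cg i) - int (dg i) < int k \<and> k \<le> cg i}"

definition fk :: "nat \<Rightarrow> (nat \<Rightarrow> nat) \<Rightarrow> (nat \<Rightarrow> nat) \<Rightarrow> nat \<Rightarrow> nat set \<Rightarrow> nat" where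
  "fk K dg cg k S = max (card (U K dg cg k \<inter> S)) 1"

definition ffree1 :: "(nat \<Rightarrow> nat) \<Rightarrow> (nat \<Rightarrow> nat) \<Rightarrow> nat \<Rightarrow> nat" where
  "ffree1 dg cg i = (dg i - cg i) + (cg i - dg 0)"

definition ffree :: "(nat \<Rightarrow> nat) \<Rightarrow> (nat \<Rightarrow> nat) \<Rightarrow> nat set \<Rightarrow> nat" where
  "ffree dg cg S = (\<Sum>i\<in>S. ffree1 dg cg i)"

definition Gamma :: "nat \<Rightarrow> constr set" where
  "Gamma K = {Ind i | i. i \<le> K} \<union> {SumC S | S. S \<noteq> {} \<and> S \<subseteq> {1..K}}"

fun lhs :: "(nat \<Rightarrow> real) \<Rightarrow> constr \<Rightarrow> real" where
  "lhs r (Ind i) = r i"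
| "lhs r (SumC S) = r 0 + (\<Sum>i\<in>S. r i)"

fun rhs :: "nat \<Rightarrow> (nat \<Rightarrow> nat) \<Rightarrow> (nat \<Rightarrow> nat) \<Rightarrow> constr \<Rightarrow> nat" where
  "rhs K dg cg (Ind i) = dg i"
| "rhs K dg cg (SumC S) = ffree dg cg S + (\<Sum>k=1..dg 0. fk K dg cg k S)"

definition consistent :: "nat \<Rightarrow> (nat \<Rightarrow> nat) \<Rightarrow> (nat \<Rightarrow> nat) \<Rightarrow> constr set \<Rightarrow> bool" where
  "consistent K dg cg A \<longleftrightarrow>
     (\<exists>r :: nat \<Rightarrow> real. (\<forall>i\<le>K. 0 \<le> r i) \<and>
        (\<forall>c\<in>A. lhs r c = real (rhs K dg cg c)) \<and>
        (\<forall>c\<in>Gamma K. lhs r c \<le> real (rhs K dg cg c)))"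

fun Ns :: "nat \<Rightarrow> (nat \<Rightarrow> nat) \<Rightarrow> (nat \<Rightarrow> nat) \<Rightarrow> constr \<Rightarrow> nat set" where
  "Ns K dg cg (SumC S) = {k. 1 \<le> k \<and> k \<le> dg 0 \<and> card (U K dg cg k \<inter> S) \<ge> 2}"
| "Ns K dg cg (Ind i) = (if i = 0 then {} else {k. 1 \<le> k \<and> k \<le> dg 0 \<and> i \<in> U K dg cg k})"

fun Nd :: "nat \<Rightarrow> (nat \<Rightarrow> nat) \<Rightarrow> (nat \<Rightarrow> nat) \<Rightarrow> constr \<Rightarrow> nat set" where
  "Nd K dg cg (SumC S) = {k. 1 \<le> k \<and> k \<le> dg 0 \<and> U K dg cg k \<inter> S = {}}"
| "Nd K dg cg (Ind i) = (if i = 0 then {1..dg 0} else {})"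

definition compatible :: "nat \<Rightarrow> (nat \<Rightarrow> nat) \<Rightarrow> (nat \<Rightarrow> nat) \<Rightarrow> constr set \<Rightarrow> bool" where
  "compatible K dg cg A \<longleftrightarrow>
     (\<forall>c\<in>A. \<forall>c'\<in>A. Ns K dg cg c \<inter> Nd K dg cg c' = {} \<and> Ns K dg cg c' \<inter> Nd K dg cg c = {})"

end

theory Submission
  imports Defs
begin

lemma U_iff: "x \<in> U K dg cg l \<longleftrightarrow> 1 \<le> x \<and> x \<le> K \<and> int (cg x) - int (dg x) < int l \<and> l \<le> cg x"
  by (simp add: U_def)

lemma finite_U: "finite (U K dg cg l)"
  by (rule finite_subset[of _ "{1..K}"]) (auto simp: U_def)

lemma level_ineq:
  fixes Uk X X' S T :: "nat set"
  assumes "finite Uk" "X \<union> X' = S \<union> T" "X \<inter> X' = S \<inter> T"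
    and "(Uk\<inter>S \<noteq> {} \<longrightarrow> Uk\<inter>X \<noteq> {}) \<and> (Uk\<inter>T \<noteq> {} \<longrightarrow> Uk\<inter>X' \<noteq> {}) \<or>
         (Uk\<inter>S \<noteq> {} \<longrightarrow> Uk\<inter>X' \<noteq> {}) \<and> (Uk\<inter>T \<noteq> {} \<longrightarrow> Uk\<inter>X \<noteq> {})"
  shows "max (card (Uk\<inter>X)) 1 + max (card (Uk\<inter>X')) 1 \<le> max (card (Uk\<inter>S)) 1 + max (card (Uk\<inter>T)) 1"
proof -
  have f: "finite (Uk \<inter> Z)" for Z using assms(1) by simp
  have "card (Uk\<inter>X) + card (Uk\<inter>X') = card ((Uk\<inter>X) \<union> (Uk\<inter>X')) + card ((Uk\<inter>X) \<inter> (Uk\<inter>X'))"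
    using card_Un_Int[OF f f] by blast
  also have "\<dots> = card ((Uk\<inter>S) \<union> (Uk\<inter>T)) + card ((Uk\<inter>S) \<inter> (Uk\<inter>T))"
  proof -
    have "(Uk\<inter>X) \<union> (Uk\<inter>X') = (Uk\<inter>S) \<union> (Uk\<inter>T)" using assms(2) by blast
    moreover have "(Uk\<inter>X) \<inter> (Uk\<inter>X') = (Uk\<inter>S) \<inter> (Uk\<inter>T)" using assms(3) by blast
    ultimately show ?thesis by simp
  qed
  also have "\<dots> = card (Uk\<inter>S) + card (Uk\<inter>T)"
    using card_Un_Int[OF f f] by simp
  finally have eq: "card (Uk\<inter>X) + card (Uk\<inter>X') = card (Uk\<inter>S) + card (Uk\<inter>T)" .
  have z: "card (Uk \<inter> Z) = 0 \<longleftrightarrow> Uk \<inter> Z = {}" for Z using f[of Z] by simp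
  show ?thesis
  proof (cases "Uk\<inter>S = {}")
    case True
    then show ?thesis using eq assms(4) z[of X] z[of X'] z[of S] z[of T] by (cases "Uk \<inter> T = {}") (auto simp: max_def)
  next
    case False
    then show ?thesis using eq assms(4) z[of X] z[of X'] z[of S] z[of T] by (cases "Uk \<inter> T = {}") (auto simp: max_def)
  qed
qed

lemma level_strict:
  fixes Uk X X' S T :: "nat set"
  assumes "finite Uk" "X \<union> X' = S \<union> T" "X \<inter> X' = S \<inter> T"
    and "Uk\<inter>X \<noteq> {}" "Uk\<inter>X' \<noteq> {}" "Uk \<inter> T = {}"
  shows "max (card (Uk\<inter>X)) 1 + max (card (Uk\<inter>X')) 1 < max (card (Uk\<inter>S)) 1 + max (card (Uk\<inter>T)) 1"
proof -
  have f: "finite (Uk \<inter> Z)" for Z using assms(1) by simp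
  have "card (Uk\<inter>X) + card (Uk\<inter>X') = card ((Uk\<inter>X) \<union> (Uk\<inter>X')) + card ((Uk\<inter>X) \<inter> (Uk\<inter>X'))"
    using card_Un_Int[OF f f] by blast
  also have "\<dots> = card ((Uk\<inter>S) \<union> (Uk\<inter>T)) + card ((Uk\<inter>S) \<inter> (Uk\<inter>T))"
  proof -
    have "(Uk\<inter>X) \<union> (Uk\<inter>X') = (Uk\<inter>S) \<union> (Uk\<inter>T)" using assms(2) by blast
    moreover have "(Uk\<inter>X) \<inter> (Uk\<inter>X') = (Uk\<inter>S) \<inter> (Uk\<inter>T)" using assms(3) by blast
    ultimately show ?thesis by simp
  qed
  also have "\<dots> = card (Uk\<inter>S) + card (Uk\<inter>T)"
    using card_Un_Int[OF f f] by simp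
  finally have eq: "card (Uk\<inter>X) + card (Uk\<inter>X') = card (Uk\<inter>S) + card (Uk\<inter>T)" .
  have z: "card (Uk \<inter> Z) = 0 \<longleftrightarrow> Uk \<inter> Z = {}" for Z using f[of Z] by simp
  show ?thesis using eq assms(4-6) z[of X] z[of X'] z[of T] by (simp add: max_def)
qed

lemma sum_union_inter:
  assumes "finite S" "finite T" "X \<union> X' = S \<union> T" "X \<inter> X' = S \<inter> T"
  shows "sum h X + sum h X' = sum h S + (sum h T :: 'a::comm_monoid_add)"
proof -
  have fX: "finite X" "finite X'" using assms by (metis finite_Un)+
  have "sum h X + sum h X' = sum h (X \<union> X') + sum h (X \<inter> X')"
    by (rule sym[OF sum.union_inter[OF fX]])
  also have "\<dots> = sum h (S \<union> T) + sum h (S \<inter> T)" using assms by simp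
  also have "\<dots> = sum h S + sum h T" using sum.union_inter[OF assms(1,2)] by simp
  finally show ?thesis .
qed


lemma exch:
  assumes all: "\<forall>c\<in>Gamma K. lhs r c \<le> real (rhs K dg cg c)"
    and tS: "lhs r (SumC S) = real (rhs K dg cg (SumC S))"
    and tT: "lhs r (SumC T) = real (rhs K dg cg (SumC T))"
    and sS: "S \<subseteq> {1..K}" and sT: "T \<subseteq> {1..K}"
    and nX: "X \<noteq> {}" and sX: "X \<subseteq> {1..K}" and nX': "X' \<noteq> {}" and sX': "X' \<subseteq> {1..K}"
    and un: "X \<union> X' = S \<union> T" and it: "X \<inter> X' = S \<inter> T"
    and lt: "(\<Sum>l=1..dg 0. fk K dg cg l X) + (\<Sum>l=1..dg 0. fk K dg cg l X')
          < (\<Sum>l=1..dg 0. fk K dg cg l S) + (\<Sum>l=1..dg 0. fk K dg cg l T)"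
  shows False
proof -
  have fS: "finite S" and fT: "finite T" using sS sT finite_subset by blast+
  have gX: "SumC X \<in> Gamma K" using nX sX by (auto simp: Gamma_def)
  have gX': "SumC X' \<in> Gamma K" using nX' sX' by (auto simp: Gamma_def)
  have hX: "r 0 + sum r X \<le> real (ffree dg cg X) + real (\<Sum>l=1..dg 0. fk K dg cg l X)"
    using bspec[OF all gX] by simp
  have hX': "r 0 + sum r X' \<le> real (ffree dg cg X') + real (\<Sum>l=1..dg 0. fk K dg cg l X')"
    using bspec[OF all gX'] by simp
  have hS: "r 0 + sum r S = real (ffree dg cg S) + real (\<Sum>l=1..dg 0. fk K dg cg l S)"
    using tS by simp
  have hT: "r 0 + sum r T = real (ffree dg cg T) + real (\<Sum>l=1..dg 0. fk K dg cg l T)"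
    using tT by simp
  have e1: "sum r X + sum r X' = sum r S + sum r T" using sum_union_inter[OF fS fT un it] .
  have e2: "ffree dg cg X + ffree dg cg X' = ffree dg cg S + ffree dg cg T"
    unfolding ffree_def using sum_union_inter[OF fS fT un it] .
  have e2': "real (ffree dg cg X) + real (ffree dg cg X') = real (ffree dg cg S) + real (ffree dg cg T)"
    using e2 by (metis of_nat_add)
  have lt': "real (\<Sum>l=1..dg 0. fk K dg cg l X) + real (\<Sum>l=1..dg 0. fk K dg cg l X')
          < real (\<Sum>l=1..dg 0. fk K dg cg l S) + real (\<Sum>l=1..dg 0. fk K dg cg l T)"
    using lt by (metis of_nat_add of_nat_less_iff)
  show False using hX hX' hS hT e1 e2' lt' by linarith
qed

lemma sum_levels:
  assumes un: "X \<union> X' = S \<union> T" and it: "X \<inter> X' = S \<inter> T"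
    and opt: "\<And>l. l \<in> {1..dg 0} \<Longrightarrow>
      (U K dg cg l\<inter>S \<noteq> {} \<longrightarrow> U K dg cg l\<inter>X \<noteq> {}) \<and> (U K dg cg l\<inter>T \<noteq> {} \<longrightarrow> U K dg cg l\<inter>X' \<noteq> {}) \<or>
      (U K dg cg l\<inter>S \<noteq> {} \<longrightarrow> U K dg cg l\<inter>X' \<noteq> {}) \<and> (U K dg cg l\<inter>T \<noteq> {} \<longrightarrow> U K dg cg l\<inter>X \<noteq> {})"
    and k: "k \<in> {1..dg 0}" and kX: "U K dg cg k \<inter> X \<noteq> {}" and kX': "U K dg cg k \<inter> X' \<noteq> {}"
    and kT: "U K dg cg k \<inter> T = {}"
  shows "(\<Sum>l=1..dg 0. fk K dg cg l X) + (\<Sum>l=1..dg 0. fk K dg cg l X')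
          < (\<Sum>l=1..dg 0. fk K dg cg l S) + (\<Sum>l=1..dg 0. fk K dg cg l T)"
proof -
  have "(\<Sum>l=1..dg 0. fk K dg cg l X + fk K dg cg l X') < (\<Sum>l=1..dg 0. fk K dg cg l S + fk K dg cg l T)"
  proof (rule sum_strict_mono_ex1)
    show "finite {1..dg 0}" by simp
    show "\<forall>l\<in>{1..dg 0}. fk K dg cg l X + fk K dg cg l X' \<le> fk K dg cg l S + fk K dg cg l T"
    proof
      fix l assume l: "l \<in> {1..dg 0}"
      show "fk K dg cg l X + fk K dg cg l X' \<le> fk K dg cg l S + fk K dg cg l T"
        unfolding fk_def by (rule level_ineq[OF finite_U un it opt[OF l]])
    qed
    show "\<exists>l\<in>{1..dg 0}. fk K dg cg l X + fk K dg cg l X' < fk K dg cg l S + fk K dg cg l T"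
      using level_strict[OF finite_U un it kX kX' kT] k unfolding fk_def by (intro bexI)
  qed
  then show ?thesis by (simp add: sum.distrib)
qed

lemma case_e:
  assumes all: "\<forall>c\<in>Gamma K. lhs r c \<le> real (rhs K dg cg c)"
    and tS: "lhs r (SumC S) = real (rhs K dg cg (SumC S))"
    and tT: "lhs r (SumC T) = real (rhs K dg cg (SumC T))"
    and sS: "S \<subseteq> {1..K}" and sT: "T \<subseteq> {1..K}" and nT: "T \<noteq> {}"
    and k: "k \<in> {1..dg 0}" and c2: "2 \<le> card (U K dg cg k \<inter> S)"
    and kT: "U K dg cg k \<inter> T = {}"
  shows False
proof -
  define lo where "lo x = int (cg x) - int (dg x)" for x
  define Sk where "Sk = U K dg cg k \<inter> S"
  have Uiff: "x \<in> U K dg cg l \<longleftrightarrow> 1 \<le> x \<and> x \<le> K \<and> lo x < int l \<and> l \<le> cg x" for x l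
    unfolding lo_def by (rule U_iff)
  have fSk: "finite Sk" unfolding Sk_def using finite_U by blast
  have nSk: "Sk \<noteq> {}" using c2 unfolding Sk_def by auto
  obtain p where pS: "p \<in> Sk" and pmin: "\<And>x. x \<in> Sk \<Longrightarrow> lo p \<le> lo x"
  proof -
    have "Min (lo ` Sk) \<in> lo ` Sk" using fSk nSk by simp
    then obtain p where "p \<in> Sk" "lo p = Min (lo ` Sk)" by auto
    moreover have "\<And>x. x \<in> Sk \<Longrightarrow> Min (lo ` Sk) \<le> lo x" using fSk by simp
    ultimately show ?thesis using that by metis
  qed
  obtain q where qS: "q \<in> Sk" and qmax: "\<And>x. x \<in> Sk \<Longrightarrow> cg x \<le> cg q"
  proof -
    have "Max (cg ` Sk) \<in> cg ` Sk" using fSk nSk by simp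
    then obtain q where "q \<in> Sk" "cg q = Max (cg ` Sk)" by auto
    moreover have "\<And>x. x \<in> Sk \<Longrightarrow> lo x \<le> Max (cg ` Sk) \<longrightarrow> True" by simp
    moreover have "\<And>x. x \<in> Sk \<Longrightarrow> cg x \<le> Max (cg ` Sk)" using fSk by simp
    ultimately show ?thesis using that by metis
  qed
  have SkU: "x \<in> Sk \<Longrightarrow> x \<in> U K dg cg k \<and> x \<in> S" for x unfolding Sk_def by auto
  have kT': "x \<in> T \<Longrightarrow> x \<notin> U K dg cg k" for x using kT by auto
  have gtk: "\<exists>x\<in>Sk. x \<noteq> y" for y
  proof (rule ccontr)
    assume "\<not> ?thesis"
    then have "Sk \<subseteq> {y}" by auto
    then have "card Sk \<le> 1" using card_mono[of "{y}" Sk] by simp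
    then show False using c2 unfolding Sk_def by simp
  qed
  have fS: "finite S" using sS finite_subset by blast
  show False
  proof (cases "p = q")
    case True
    obtain j where jS: "j \<in> Sk" and jp: "j \<noteq> p" using gtk by blast
    define X where "X = S - {j}"
    define X' where "X' = insert j T"
    have nest: "j \<in> U K dg cg l \<Longrightarrow> p \<in> U K dg cg l" for l
      using pmin[OF jS] qmax[OF jS] True SkU[OF pS] SkU[OF jS] unfolding Uiff by auto
    show False
    proof (rule exch[OF all tS tT sS sT])
      show "X \<noteq> {}" using pS jp SkU[OF pS] unfolding X_def by auto
      show "X \<subseteq> {1..K}" using sS unfolding X_def by auto
      show "X' \<noteq> {}" unfolding X'_def by auto
      show "X' \<subseteq> {1..K}" using sT SkU[OF jS] sS unfolding X'_def by auto
      show un: "X \<union> X' = S \<union> T" using SkU[OF jS] unfolding X_def X'_def by auto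
      show it: "X \<inter> X' = S \<inter> T" using SkU[OF jS] kT' unfolding X_def X'_def by auto
      show "(\<Sum>l=1..dg 0. fk K dg cg l X) + (\<Sum>l=1..dg 0. fk K dg cg l X')
          < (\<Sum>l=1..dg 0. fk K dg cg l S) + (\<Sum>l=1..dg 0. fk K dg cg l T)"
      proof (rule sum_levels[where K=K and dg=dg and cg=cg and k=k, OF un it])
        fix l assume "l \<in> {1..dg 0}"
        have "U K dg cg l\<inter>S \<noteq> {} \<longrightarrow> U K dg cg l\<inter>X \<noteq> {}"
        proof
          assume "U K dg cg l\<inter>S \<noteq> {}"
          then obtain x where x: "x \<in> U K dg cg l" "x \<in> S" by auto
          show "U K dg cg l\<inter>X \<noteq> {}"
          proof (cases "x = j")
            case True
            then show ?thesis using nest[of l] x SkU[OF pS] jp unfolding X_def by auto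
          next
            case False
            then show ?thesis using x unfolding X_def by auto
          qed
        qed
        moreover have "U K dg cg l\<inter>T \<noteq> {} \<longrightarrow> U K dg cg l\<inter>X' \<noteq> {}" unfolding X'_def by auto
        ultimately show "(U K dg cg l\<inter>S \<noteq> {} \<longrightarrow> U K dg cg l\<inter>X \<noteq> {}) \<and> (U K dg cg l\<inter>T \<noteq> {} \<longrightarrow> U K dg cg l\<inter>X' \<noteq> {}) \<or>
          (U K dg cg l\<inter>S \<noteq> {} \<longrightarrow> U K dg cg l\<inter>X' \<noteq> {}) \<and> (U K dg cg l\<inter>T \<noteq> {} \<longrightarrow> U K dg cg l\<inter>X \<noteq> {})" by blast
      next
        show "k \<in> {1..dg 0}" by (rule k)
        show "U K dg cg k \<inter> X \<noteq> {}" using SkU[OF pS] jp unfolding X_def by auto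
        show "U K dg cg k \<inter> X' \<noteq> {}" using SkU[OF jS] unfolding X'_def by auto
        show "U K dg cg k \<inter> T = {}" by (rule kT)
      qed
    qed
  next
    case False
    define X where "X = {x\<in>S. cg x < k} \<union> (Sk - {q}) \<union> {x\<in>T. \<not> cg x < k}"
    define X' where "X' = {x\<in>S. x \<notin> U K dg cg k \<and> \<not> cg x < k} \<union> {q} \<union> {x\<in>T. cg x < k}"
    have qk: "k \<le> cg q" using SkU[OF qS] unfolding Uiff by auto
    show False
    proof (rule exch[OF all tS tT sS sT])
      show "X \<noteq> {}" using pS False unfolding X_def by auto
      show "X \<subseteq> {1..K}" using sS sT SkU unfolding X_def by auto
      show "X' \<noteq> {}" unfolding X'_def by auto
      show "X' \<subseteq> {1..K}" using sT SkU[OF qS] sS unfolding X'_def by auto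
      show un: "X \<union> X' = S \<union> T" using SkU[OF qS] unfolding X_def X'_def Sk_def by auto
      show it: "X \<inter> X' = S \<inter> T"
      proof
        show "X \<inter> X' \<subseteq> S \<inter> T"
        proof
          fix x assume x: "x \<in> X \<inter> X'"
          have xk: "x \<in> U K dg cg k \<Longrightarrow> k \<le> cg x" using Uiff by blast
          show "x \<in> S \<inter> T" using x qk xk kT' SkU[OF qS] unfolding X_def X'_def Sk_def by auto
        qed
        show "S \<inter> T \<subseteq> X \<inter> X'" using kT' unfolding X_def X'_def Sk_def by auto
      qed
      show "(\<Sum>l=1..dg 0. fk K dg cg l X) + (\<Sum>l=1..dg 0. fk K dg cg l X')
          < (\<Sum>l=1..dg 0. fk K dg cg l S) + (\<Sum>l=1..dg 0. fk K dg cg l T)"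
      proof (rule sum_levels[where K=K and dg=dg and cg=cg and k=k, OF un it])
        fix l assume l: "l \<in> {1..dg 0}"
        consider "l < k" | "l = k" | "k < l" by linarith
        then show "(U K dg cg l\<inter>S \<noteq> {} \<longrightarrow> U K dg cg l\<inter>X \<noteq> {}) \<and> (U K dg cg l\<inter>T \<noteq> {} \<longrightarrow> U K dg cg l\<inter>X' \<noteq> {}) \<or>
          (U K dg cg l\<inter>S \<noteq> {} \<longrightarrow> U K dg cg l\<inter>X' \<noteq> {}) \<and> (U K dg cg l\<inter>T \<noteq> {} \<longrightarrow> U K dg cg l\<inter>X \<noteq> {})"
        proof cases
          case 1
          have a: "U K dg cg l\<inter>S \<noteq> {} \<longrightarrow> U K dg cg l\<inter>X \<noteq> {}"
          proof
            assume "U K dg cg l\<inter>S \<noteq> {}"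
            then obtain x where x: "x \<in> U K dg cg l" "x \<in> S" by auto
            show "U K dg cg l\<inter>X \<noteq> {}"
            proof (cases "cg x < k")
              case True then show ?thesis using x unfolding X_def by auto
            next
              case c: False
              then have "x \<in> U K dg cg k" using x 1 unfolding Uiff by auto
              then have "x \<in> Sk" using x unfolding Sk_def by auto
              then have "p \<in> U K dg cg l" using pmin[of x] SkU[OF pS] x 1 unfolding Uiff by auto
              then show ?thesis using pS False unfolding X_def by auto
            qed
          qed
          have b: "U K dg cg l\<inter>T \<noteq> {} \<longrightarrow> U K dg cg l\<inter>X' \<noteq> {}"
          proof
            assume "U K dg cg l\<inter>T \<noteq> {}"
            then obtain x where x: "x \<in> U K dg cg l" "x \<in> T" by auto
            have "cg x < k"
            proof (rule ccontr)
              assume "\<not> cg x < k"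
              then have "x \<in> U K dg cg k" using x 1 unfolding Uiff by auto
              then show False using kT' x by blast
            qed
            then show "U K dg cg l\<inter>X' \<noteq> {}" using x unfolding X'_def by auto
          qed
          show ?thesis using a b by blast
        next
          case 2
          have "U K dg cg l\<inter>X \<noteq> {}"
          proof -
            obtain j where "j \<in> Sk" "j \<noteq> q" using gtk by blast
            then show ?thesis using 2 SkU unfolding X_def by auto
          qed
          moreover have "U K dg cg l\<inter>X' \<noteq> {}" using 2 SkU[OF qS] unfolding X'_def by auto
          ultimately show ?thesis by blast
        next
          case 3
          have a: "U K dg cg l\<inter>S \<noteq> {} \<longrightarrow> U K dg cg l\<inter>X' \<noteq> {}"
          proof
            assume "U K dg cg l\<inter>S \<noteq> {}"
            then obtain x where x: "x \<in> U K dg cg l" "x \<in> S" by auto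
            have xk: "\<not> cg x < k" using x 3 unfolding Uiff by auto
            show "U K dg cg l\<inter>X' \<noteq> {}"
            proof (cases "x \<in> U K dg cg k")
              case False then show ?thesis using x xk unfolding X'_def by auto
            next
              case True
              then have "x \<in> Sk" using x unfolding Sk_def by auto
              then have "q \<in> U K dg cg l" using qmax[of x] SkU[OF qS] x 3 unfolding Uiff by auto
              then show ?thesis unfolding X'_def by auto
            qed
          qed
          have b: "U K dg cg l\<inter>T \<noteq> {} \<longrightarrow> U K dg cg l\<inter>X \<noteq> {}"
          proof
            assume "U K dg cg l\<inter>T \<noteq> {}"
            then obtain x where x: "x \<in> U K dg cg l" "x \<in> T" by auto
            have "\<not> cg x < k" using x 3 unfolding Uiff by auto
            then show "U K dg cg l\<inter>X \<noteq> {}" using x unfolding X_def by auto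
          qed
          show ?thesis using a b by blast
        qed
      next
        show "k \<in> {1..dg 0}" by (rule k)
        show "U K dg cg k \<inter> X \<noteq> {}"
        proof -
          obtain j where "j \<in> Sk" "j \<noteq> q" using gtk by blast
          then show ?thesis using SkU unfolding X_def by auto
        qed
        show "U K dg cg k \<inter> X' \<noteq> {}" using SkU[OF qS] unfolding X'_def by auto
        show "U K dg cg k \<inter> T = {}" by (rule kT)
      qed
    qed
  qed
qed

lemma fk_single: "fk K dg cg l {i} = 1"
proof -
  have "card (U K dg cg l \<inter> {i}) \<le> 1"
    using card_mono[of "{i}" "U K dg cg l \<inter> {i}"] by auto
  then show ?thesis unfolding fk_def by simp
qed

lemma sum_fk_single: "(\<Sum>l=1..dg 0. fk K dg cg l {i}) = dg 0"
  by (simp add: fk_single)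

lemma single_bound:
  assumes all: "\<forall>c\<in>Gamma K. lhs r c \<le> real (rhs K dg cg c)"
    and i: "1 \<le> i" "i \<le> K"
  shows "r 0 + r i \<le> real (ffree1 dg cg i) + real (dg 0)"
proof -
  have "SumC {i} \<in> Gamma K" using i by (auto simp: Gamma_def)
  then have h: "lhs r (SumC {i}) \<le> real (rhs K dg cg (SumC {i}))" using all by blast
  have e: "rhs K dg cg (SumC {i}) = ffree1 dg cg i + dg 0" unfolding rhs.simps sum_fk_single by (simp add: ffree_def)
  have "lhs r (SumC {i}) \<le> real (ffree1 dg cg i) + real (dg 0)" using h unfolding e of_nat_add .
  moreover have "lhs r (SumC {i}) = r 0 + r i" by simp
  ultimately show ?thesis by simp
qed

lemma case_a:
  assumes all: "\<forall>c\<in>Gamma K. lhs r c \<le> real (rhs K dg cg c)"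
    and ri: "r i = real (dg i)" and r0: "r 0 = real (dg 0)"
    and k: "k \<in> {1..dg 0}" and iU: "i \<in> U K dg cg k"
  shows False
proof -
  have i: "1 \<le> i" "i \<le> K" and c: "int (cg i) - int (dg i) < int k" "k \<le> cg i" using iU by (auto simp: U_iff)
  have "dg i \<le> ffree1 dg cg i" using single_bound[OF all i] ri r0 by simp
  then show False using c k unfolding ffree1_def by auto
qed

lemma case_c:
  assumes all: "\<forall>c\<in>Gamma K. lhs r c \<le> real (rhs K dg cg c)"
    and tS: "lhs r (SumC S) = real (rhs K dg cg (SumC S))"
    and r0: "r 0 = real (dg 0)" and sS: "S \<subseteq> {1..K}"
    and k: "k \<in> {1..dg 0}" and c2: "2 \<le> card (U K dg cg k \<inter> S)"
  shows False
proof -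
  have "r i \<le> real (ffree1 dg cg i)" if "i \<in> S" for i
    using single_bound[OF all, of i] that sS r0 by auto
  then have "sum r S \<le> (\<Sum>i\<in>S. real (ffree1 dg cg i))" by (rule sum_mono)
  then have a: "sum r S \<le> real (ffree dg cg S)" by (simp add: ffree_def)
  have "(\<Sum>l=1..dg 0. 1 + (if l = k then 1 else 0)) \<le> (\<Sum>l=1..dg 0. fk K dg cg l S)"
  proof (rule sum_mono)
    fix l assume "l \<in> {1..dg 0}"
    show "1 + (if l = k then 1 else 0) \<le> fk K dg cg l S" using c2 unfolding fk_def by auto
  qed
  moreover have "(\<Sum>l=1..dg 0. 1 + (if l = k then 1 else (0::nat))) = dg 0 + 1"
    using k by (simp only: sum.distrib sum.delta) simp
  ultimately have b: "dg 0 + 1 \<le> (\<Sum>l=1..dg 0. fk K dg cg l S)" by simp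
  have "r 0 + sum r S = real (ffree dg cg S) + real (\<Sum>l=1..dg 0. fk K dg cg l S)" using tS by simp
  moreover have "real (dg 0) + 1 \<le> real (\<Sum>l=1..dg 0. fk K dg cg l S)" using b
    by (metis of_nat_1 of_nat_add of_nat_le_iff)
  ultimately show False using a r0 by linarith
qed

lemma levels_card:
  assumes "1 \<le> i" "i \<le> K"
  shows "{l \<in> {1..dg 0}. i \<in> U K dg cg l} = {max 1 (cg i + 1 - dg i) .. min (dg 0) (cg i)}"
  using assms by (auto simp: U_iff)

lemma case_b:
  assumes all: "\<forall>c\<in>Gamma K. lhs r c \<le> real (rhs K dg cg c)"
    and ri: "r i = real (dg i)"
    and tT: "lhs r (SumC T) = real (rhs K dg cg (SumC T))"
    and sT: "T \<subseteq> {1..K}"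
    and k: "k \<in> {1..dg 0}" and iU: "i \<in> U K dg cg k" and kT: "U K dg cg k \<inter> T = {}"
  shows False
proof -
  have i: "1 \<le> i" "i \<le> K" and c: "int (cg i) - int (dg i) < int k" "k \<le> cg i" using iU by (auto simp: U_iff)
  have iT: "i \<notin> T" using kT iU by auto
  have fT: "finite T" using sT finite_subset by blast
  have "SumC (insert i T) \<in> Gamma K" using i sT by (auto simp: Gamma_def)
  then have "lhs r (SumC (insert i T)) \<le> real (rhs K dg cg (SumC (insert i T)))" using all by blast
  then have h1: "r 0 + r i + sum r T \<le> real (ffree dg cg T) + real (ffree1 dg cg i) + real (\<Sum>l=1..dg 0. fk K dg cg l (insert i T))"
    using iT fT by (simp add: ffree_def)
  have h2: "r 0 + sum r T = real (ffree dg cg T) + real (\<Sum>l=1..dg 0. fk K dg cg l T)" using tT by simp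
  define C where "C = card {l \<in> {1..dg 0}. i \<in> U K dg cg l}"
  have "(\<Sum>l=1..dg 0. fk K dg cg l (insert i T) + (if l = k then 1 else 0))
      \<le> (\<Sum>l=1..dg 0. fk K dg cg l T + (if i \<in> U K dg cg l then 1 else 0))"
  proof (rule sum_mono)
    fix l assume "l \<in> {1..dg 0}"
    have fU: "finite (U K dg cg l \<inter> T)" using finite_U by blast
    show "fk K dg cg l (insert i T) + (if l = k then 1 else 0) \<le> fk K dg cg l T + (if i \<in> U K dg cg l then 1 else 0)"
    proof (cases "i \<in> U K dg cg l")
      case True
      then have "U K dg cg l \<inter> insert i T = insert i (U K dg cg l \<inter> T)" by auto
      then have "card (U K dg cg l \<inter> insert i T) = Suc (card (U K dg cg l \<inter> T))" using iT fU by simp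
      moreover have "l = k \<Longrightarrow> U K dg cg l \<inter> T = {}" using kT by simp
      ultimately show ?thesis unfolding fk_def using True by auto
    next
      case False
      then have "U K dg cg l \<inter> insert i T = U K dg cg l \<inter> T" by auto
      then show ?thesis unfolding fk_def using False iU by auto
    qed
  qed
  moreover have "(\<Sum>l=1..dg 0. fk K dg cg l (insert i T) + (if l = k then 1 else (0::nat)))
     = (\<Sum>l=1..dg 0. fk K dg cg l (insert i T)) + 1" using k by (simp add: sum.distrib)
  moreover have "(\<Sum>l=1..dg 0. fk K dg cg l T + (if i \<in> U K dg cg l then 1 else (0::nat)))
     = (\<Sum>l=1..dg 0. fk K dg cg l T) + C"
    unfolding C_def by (simp add: sum.distrib sum.inter_filter[symmetric])
  ultimately have h3: "(\<Sum>l=1..dg 0. fk K dg cg l (insert i T)) + 1 \<le> (\<Sum>l=1..dg 0. fk K dg cg l T) + C" by simp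
  have Ceq: "C = Suc (min (dg 0) (cg i)) - max 1 (cg i + 1 - dg i)"
    unfolding C_def levels_card[OF i] by simp
  have lo: "max 1 (cg i + 1 - dg i) \<le> k" using c k by auto
  have hi: "k \<le> min (dg 0) (cg i)" using c k by auto
  have h4: "ffree1 dg cg i + C = dg i" unfolding Ceq ffree1_def using lo hi by (auto simp: max_def min_def)
  have h3': "real (\<Sum>l=1..dg 0. fk K dg cg l (insert i T)) + 1 \<le> real (\<Sum>l=1..dg 0. fk K dg cg l T) + real C"
    using h3 by (metis of_nat_1 of_nat_add of_nat_le_iff)
  have h4': "real (ffree1 dg cg i) + real C = real (dg i)" using h4 by (metis of_nat_add)
  show False using h1 h2 h3' h4' ri by linarith
qed

lemma gamma_sum: "SumC S \<in> Gamma K \<Longrightarrow> S \<noteq> {} \<and> S \<subseteq> {1..K}"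
  by (auto simp: Gamma_def)

lemma one_dir:
  assumes all: "\<forall>c\<in>Gamma K. lhs r c \<le> real (rhs K dg cg c)"
    and c: "c \<in> Gamma K" and c': "c' \<in> Gamma K"
    and tc: "lhs r c = real (rhs K dg cg c)" and tc': "lhs r c' = real (rhs K dg cg c')"
  shows "Ns K dg cg c \<inter> Nd K dg cg c' = {}"
proof (rule ccontr)
  assume "Ns K dg cg c \<inter> Nd K dg cg c' \<noteq> {}"
  then obtain k where kN: "k \<in> Ns K dg cg c" "k \<in> Nd K dg cg c'" by blast
  show False
  proof (cases c)
    case (Ind i)
    then have i0: "i \<noteq> 0" and k: "k \<in> {1..dg 0}" and iU: "i \<in> U K dg cg k" using kN by (auto split: if_splits)
    have ri: "r i = real (dg i)" using tc Ind by simp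
    show False
    proof (cases c')
      case (Ind j)
      then have "j = 0" using kN by (auto split: if_splits)
      then have "r 0 = real (dg 0)" using tc' Ind by simp
      then show False using case_a[OF all ri _ k iU] by simp
    next
      case (SumC T)
      then have kT: "U K dg cg k \<inter> T = {}" using kN by auto
      have sT: "T \<subseteq> {1..K}" using gamma_sum c' SumC by blast
      show False using case_b[OF all ri tc'[unfolded SumC] sT k iU kT] .
    qed
  next
    case (SumC S)
    then have k: "k \<in> {1..dg 0}" and c2: "2 \<le> card (U K dg cg k \<inter> S)" using kN by auto
    have sS: "S \<subseteq> {1..K}" using gamma_sum c SumC by blast
    show False
    proof (cases c')
      case (Ind j)
      then have "j = 0" using kN by (auto split: if_splits)
      then have r0: "r 0 = real (dg 0)" using tc' Ind by simp
      show False using case_c[OF all tc[unfolded SumC] r0 sS k c2] .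
    next
      case (SumC T)
      then have kT: "U K dg cg k \<inter> T = {}" using kN by auto
      have sT: "T \<subseteq> {1..K}" and nT: "T \<noteq> {}" using gamma_sum c' SumC by blast+
      show False using case_e[OF all tc[unfolded \<open>c = SumC S\<close>] tc'[unfolded SumC] sS sT nT k c2 kT] .
    qed
  qed
qed

theorem lemma3:
  fixes K :: nat and dg cg :: "nat \<Rightarrow> nat" and A :: "constr set"
  assumes "A \<subseteq> Gamma K"
    and "consistent K dg cg A"
  shows "compatible K dg cg A"
proof -
  obtain r :: "nat \<Rightarrow> real" where
    tA: "\<forall>c\<in>A. lhs r c = real (rhs K dg cg c)" and all: "\<forall>c\<in>Gamma K. lhs r c \<le> real (rhs K dg cg c)"
    using assms(2) unfolding consistent_def by blast
  show ?thesis unfolding compatible_def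
  proof (intro ballI conjI)
    fix c c' assume "c \<in> A" "c' \<in> A"
    then show "Ns K dg cg c \<inter> Nd K dg cg c' = {}" "Ns K dg cg c' \<inter> Nd K dg cg c = {}"
      using one_dir[OF all] assms(1) tA by blast+
  qed
qed

end
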